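(* For any positive integers $a,b,n$, in $\mathfrak{h}^1_t$, $$\sum_{m=1}^nd_m(t)\,z_{b+(m-1)a}\ast_t z_a^{n-m}=\sum_{m=0}^{n-1}z_a^mz_bz_a^{n-1-m}.$$
   Context: $d_m(t)=t^m-(t-1)^m$. $\mathfrak{h}_t=\mathbb{Q}[t]\langle x,y\rangle$ ($1$ = empty word), $\mathfrak{h}^1_t=\mathbb{Q}[t]+\mathfrak{h}_ty$, $z_k=x^{k-1}y$, and $z_a^j$ is the concatenation power. For a word $w$, $\delta(w)=1$ if $w=1$, else $0$. The $t$-harmonic product $\ast_t$ on $\mathfrak{h}^1_t$ is the $\mathbb{Q}[t]$-bilinear product with $1\ast_t w=w\ast_t1=w$ and, for words $w_1,w_2\in\mathfrak{h}^1_t$ and $k,l\ge1$, $z_kw_1\ast_t z_lw_2=z_k(w_1\ast_t z_lw_2)+z_l(z_kw_1\ast_t w_2)+(1-2t)z_{k+l}(w_1\ast_t w_2)+[1-\delta(w_1)\delta(w_2)](t^2-t)x^{k+l}(w_1\ast_t w_2)$. *)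

theory Defs
  imports "HOL-Computational_Algebra.Polynomial" "HOL-Library.Function_Algebras"
begin

text \<open>Letters of the alphabet {x,y}; words are letter lists (empty list = 1).
An element of Q[t]<x,y> is represented by its coefficient function
word => rat poly (all elements constructed below have finite support).
Addition / zero / finite sums are pointwise (Function_Algebras).\<close>

datatype letter = X | Y

type_synonym elt = "letter list \<Rightarrow> rat poly"

definition tvar :: "rat poly" where "tvar = [:0, 1:]"

definition d :: "nat \<Rightarrow> rat poly" where
  "d m = tvar ^ m - (tvar - 1) ^ m"

definition wd :: "letter list \<Rightarrow> elt" where
  "wd v = (\<lambda>w. if w = v then 1 else 0)"

definition smult_e :: "rat poly \<Rightarrow> elt \<Rightarrow> elt" where
  "smult_e c f = (\<lambda>w. c * f w)"

text \<open>left concatenation by a word u, extended linearly\<close>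
definition lmul :: "letter list \<Rightarrow> elt \<Rightarrow> elt" where
  "lmul u f = (\<lambda>w. if take (length u) w = u then f (drop (length u) w) else 0)"

definition z :: "nat \<Rightarrow> letter list" where
  "z k = replicate (k - 1) X @ [Y]"

definition xpow :: "nat \<Rightarrow> letter list" where
  "xpow j = replicate j X"

definition zpow :: "nat \<Rightarrow> nat \<Rightarrow> letter list" where
  "zpow a j = concat (replicate j (z a))"

text \<open>t-harmonic product of two words of h^1_t (words ending in y, or empty).
A nonempty word u of h^1 is uniquely z_k w1 with k-1 = number of leading x's.\<close>
function hst :: "letter list \<Rightarrow> letter list \<Rightarrow> elt" where
  "hst u v =
    (if u = [] then wd v else if v = [] then wd u else
     (let k = length (takeWhile (\<lambda>c. c = X) u) + 1; w1 = drop k u;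
          l = length (takeWhile (\<lambda>c. c = X) v) + 1; w2 = drop l v
      in lmul (z k) (hst w1 v)
         + lmul (z l) (hst u w2)
         + smult_e (1 - 2 * tvar) (lmul (z (k + l)) (hst w1 w2))
         + smult_e (if w1 = [] \<and> w2 = [] then 0 else tvar ^ 2 - tvar)
                   (lmul (xpow (k + l)) (hst w1 w2))))"
  by pat_completeness auto
termination
  by (relation "measure (\<lambda>(u, v). length u + length v)") (auto simp: Let_def intro!: add_less_le_mono diff_less)

end

theory Submission imports Defs begin

lemma z_ne: "z c \<noteq> []" by (simp add: z_def)
lemma len_z: "c \<ge> 1 \<Longrightarrow> length (z c) = c" by (simp add: z_def)
lemma tw_z: "takeWhile (\<lambda>x. x = X) (z c @ r) = replicate (c - 1) X"
  by (simp add: z_def takeWhile_append)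
lemma zpow_Suc: "zpow a (Suc j) = z a @ zpow a j" by (simp add: zpow_def)
lemma zpow_0: "zpow a 0 = []" by (simp add: zpow_def)
lemma zpow_nil: "zpow a j = [] \<longleftrightarrow> j = 0" by (cases j) (simp_all add: zpow_Suc z_ne zpow_def)
lemma hst_nil1[simp]: "hst [] v = wd v" by (subst hst.simps) simp
lemma hst_nil2[simp]: "hst u [] = wd u" by (subst hst.simps) simp

lemma hst_step0: assumes "c \<ge> 1" "a \<ge> 1"
  shows "hst (z c) (zpow a (Suc j)) = lmul (z c) (wd (zpow a (Suc j))) + lmul (z a) (hst (z c) (zpow a j))
     + smult_e (1 - 2*tvar) (lmul (z (c+a)) (wd (zpow a j)))
     + smult_e (if j = 0 then 0 else tvar^2 - tvar) (lmul (xpow (c+a)) (wd (zpow a j)))"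
proof -
  have t1: "length (takeWhile (\<lambda>x. x = X) (z c)) + 1 = c" using tw_z[of c "[]"] assms by simp
  have t2: "length (takeWhile (\<lambda>x. x = X) (zpow a (Suc j))) + 1 = a" using tw_z[of a] assms by (simp add: zpow_Suc)
  have d1: "drop c (z c) = []" using len_z assms by simp
  have d2: "drop a (zpow a (Suc j)) = zpow a j" using len_z assms by (simp add: zpow_Suc)
  show ?thesis
    apply (subst hst.simps)
    apply (simp only: t1 t2 d1 d2 Let_def)
    using z_ne zpow_nil by (simp add: zpow_Suc)
qed

definition K :: "rat poly \<Rightarrow> elt" where "K c = (\<lambda>_. c)"
lemma K_add: "K (p + q) = K p + K q" by (simp add: K_def plus_fun_def)
lemma K_diff: "K (p - q) = K p - K q" by (simp add: K_def fun_diff_def)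
lemma K_mult: "K (p * q) = K p * K q" by (simp add: K_def times_fun_def)
lemma K_0: "K 0 = 0" by (simp add: K_def zero_fun_def)
lemma K_1: "K 1 = 1" by (simp add: K_def one_fun_def)
lemma smult_K: "smult_e c f = K c * f" by (simp add: smult_e_def times_fun_def K_def)

lemma lmul_add: "lmul u (f + g) = lmul u f + lmul u g" by (simp add: lmul_def plus_fun_def fun_eq_iff)
lemma lmul_K: "lmul u (K c * f) = K c * lmul u f" by (simp add: lmul_def times_fun_def K_def fun_eq_iff)
lemma lmul_0: "lmul u 0 = 0" by (simp add: lmul_def fun_eq_iff)
lemma lmul_sum: "lmul u (sum f A) = (\<Sum>i\<in>A. lmul u (f i))"
proof (induction A rule: infinite_finite_induct)
  case (infinite A) then show ?case by (metis sum.infinite lmul_0)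
next
  case empty then show ?case by (metis sum.empty lmul_0)
next
  case (insert x F) then show ?case by (metis sum.insert lmul_add)
qed
lemma lmul_wd: "lmul u (wd v) = wd (u @ v)"
  by (auto simp add: lmul_def wd_def fun_eq_iff append_eq_conv_conj) (metis append_take_drop_id)

lemma d_0: "d 0 = 0" by (simp add: d_def)
lemma d_1: "d 1 = 1" by (simp add: d_def)
lemma d_Suc0: "d (Suc 0) = 1" by (simp add: d_def)
lemma d_rec: "d (Suc (Suc m)) + (1 - 2*tvar) * d (Suc m) + (tvar^2 - tvar) * d m = 0"
  by (simp add: d_def algebra_simps power2_eq_square)

lemma xz: assumes "a \<ge> 1" "c \<ge> 1" shows "xpow (c+a) @ zpow a (Suc j) = z (c + 2*a) @ zpow a j"
proof -
  have "xpow (c+a) @ z a = z (c + 2*a)" using assms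
    by (simp add: xpow_def z_def replicate_add[symmetric])
  then show ?thesis by (simp add: zpow_Suc)
qed


lemma hst_step: assumes "c \<ge> 1" "a \<ge> 1"
  shows "hst (z c) (zpow a (Suc j)) = wd (z c @ zpow a (Suc j)) + lmul (z a) (hst (z c) (zpow a j))
     + K (1 - 2*tvar) * wd (z (c+a) @ zpow a j)
     + (if j = 0 then 0 else K (tvar^2 - tvar) * wd (z (c + 2*a) @ zpow a (j - 1)))"
proof (cases j)
  case 0
  then show ?thesis using hst_step0[OF assms, of j] by (simp add: smult_K lmul_wd K_0)
next
  case (Suc j')
  then show ?thesis using hst_step0[OF assms, of j] xz[OF assms(2,1), of j'] by (simp add: smult_K lmul_wd)
qed

lemma K_rec: "K (d (Suc (Suc m))) + K (1 - 2*tvar) * K (d (Suc m)) + K (tvar^2 - tvar) * K (d m) = 0"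
  using arg_cong[OF d_rec[of m], of K] by (simp only: K_add K_mult K_0)

lemma gen_abs: fixes g D :: "nat \<Rightarrow> 'a::comm_ring_1" and A B :: 'a
  assumes D0: "D 0 = 0" and D1: "D (Suc 0) = 1" and rec: "\<And>m. D (Suc (Suc m)) + A * D (Suc m) + B * D m = 0"
  shows "(\<Sum>m=1..Suc L. D m * g m) + A * (\<Sum>m=1..L. D m * g (Suc m))
     + B * (\<Sum>m=1..L-1. D m * g (Suc (Suc m))) = g 1"
proof (induction L)
  case 0
  then show ?case by (simp add: D1)
next
  case (Suc L)
  have e: "(\<Sum>m=1..Suc (Suc L). D m * g m) + A * (\<Sum>m=1..Suc L. D m * g (Suc m))
     + B * (\<Sum>m=1..Suc L-1. D m * g (Suc (Suc m)))
     = ((\<Sum>m=1..Suc L. D m * g m) + A * (\<Sum>m=1..L. D m * g (Suc m))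
     + B * (\<Sum>m=1..L-1. D m * g (Suc (Suc m))))
     + (D (Suc (Suc L)) + A * D (Suc L) + B * D L) * g (Suc (Suc L))"
  proof (cases L)
    case 0
    then show ?thesis by (simp add: D0 algebra_simps)
  next
    case (Suc L')
    then show ?thesis by (simp add: algebra_simps)
  qed
  show ?case unfolding e Suc.IH rec[of L] by simp
qed

lemma gen: fixes g :: "nat \<Rightarrow> elt"
  shows "(\<Sum>m=1..Suc L. K (d m) * g m) + K (1 - 2*tvar) * (\<Sum>m=1..L. K (d m) * g (Suc m))
     + K (tvar^2 - tvar) * (\<Sum>m=1..L-1. K (d m) * g (Suc (Suc m))) = g 1"
  by (rule gen_abs) (simp_all add: d_0 d_Suc0 K_0 K_1 K_rec)


lemma main: assumes a: "a \<ge> 1" and b: "b \<ge> 1"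
  shows "(\<Sum>m=1..Suc N. K (d m) * hst (z (b+(m-1)*a)) (zpow a (Suc N - m)))
       = (\<Sum>m=0..N. wd (zpow a m @ z b @ zpow a (N - m)))"
proof (induction N)
  case 0
  then show ?case by (simp add: d_Suc0 K_1 zpow_def)
next
  case (Suc N)
  define W where "W k = z (b+(k-1)*a) @ zpow a (Suc (Suc N) - k)" for k
  define P where "P m j = hst (z (b+(m-1)*a)) (zpow a j)" for m j
  define D where "D m = K (d m)" for m
  have step: "P m (Suc (Suc N) - m) = wd (W m) + lmul (z a) (P m (Suc N - m))
      + K (1 - 2*tvar) * wd (W (Suc m))
      + (if m = Suc N then 0 else K (tvar^2 - tvar) * wd (W (Suc (Suc m))))"
    if m: "m \<in> {1..Suc N}" for m
  proof -
    have c: "b + (m-1)*a \<ge> 1" using b by simp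
    have e1: "Suc (Suc N) - m = Suc (Suc N - m)" using m by auto
    have e2: "b + (m-1)*a + a = b + (Suc m - 1)*a" using m by (cases m) auto
    have e3: "b + (m-1)*a + 2*a = b + (Suc (Suc m) - 1)*a" using m by (cases m) auto
    have e4: "Suc N - m = Suc (Suc N) - Suc m" by simp
    have e5: "Suc N - m - 1 = Suc (Suc N) - Suc (Suc m)" by simp
    have e7: "Suc (Suc N) - Suc m - 1 = Suc (Suc N) - Suc (Suc m)" by simp
    have e6: "(Suc N - m = 0) = (m = Suc N)" using m by auto
    show ?thesis unfolding P_def W_def e1 hst_step[OF c a, of "Suc N - m"] e2 e3 e6
      by (simp only: e5 e4 e1 e7)
  qed
  have L1: "(\<Sum>m=1..Suc N. D m * P m (Suc (Suc N) - m))
     = (\<Sum>m=1..Suc N. D m * wd (W m)) + lmul (z a) (\<Sum>m=1..Suc N. D m * P m (Suc N - m))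
       + K (1 - 2*tvar) * (\<Sum>m=1..Suc N. D m * wd (W (Suc m)))
       + K (tvar^2 - tvar) * (\<Sum>m=1..Suc N. D m * (if m = Suc N then 0 else wd (W (Suc (Suc m)))))"
  proof -
    have "(\<Sum>m=1..Suc N. D m * P m (Suc (Suc N) - m))
      = (\<Sum>m=1..Suc N. D m * wd (W m) + lmul (z a) (D m * P m (Suc N - m))
       + K (1 - 2*tvar) * (D m * wd (W (Suc m)))
       + K (tvar^2 - tvar) * (D m * (if m = Suc N then 0 else wd (W (Suc (Suc m))))))"
      by (rule sum.cong) (simp_all only: step D_def lmul_K, simp_all add: algebra_simps)
    then show ?thesis by (simp only: sum.distrib sum_distrib_left lmul_sum)
  qed
  have L2: "(\<Sum>m=1..Suc N. D m * (if m = Suc N then 0 else wd (W (Suc (Suc m)))))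
      = (\<Sum>m=1..Suc N - 1. D m * wd (W (Suc (Suc m))))"
    by (simp add: sum.cl_ivl_Suc)
  have R: "(\<Sum>m=0..Suc N. wd (zpow a m @ z b @ zpow a (Suc N - m)))
      = wd (W 1) + lmul (z a) (\<Sum>m=0..N. wd (zpow a m @ z b @ zpow a (N - m)))"
    by (subst sum.atLeast0_atMost_Suc_shift) (simp add: lmul_sum lmul_wd zpow_Suc W_def zpow_0 del: sum.cl_ivl_Suc)
  have G: "(\<Sum>m=1..Suc (Suc N). D m * wd (W m)) + K (1 - 2*tvar) * (\<Sum>m=1..Suc N. D m * wd (W (Suc m)))
     + K (tvar^2 - tvar) * (\<Sum>m=1..Suc N - 1. D m * wd (W (Suc (Suc m)))) = wd (W 1)"
    unfolding D_def by (rule gen)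
  have last: "D (Suc (Suc N)) * P (Suc (Suc N)) (Suc (Suc N) - Suc (Suc N)) = D (Suc (Suc N)) * wd (W (Suc (Suc N)))"
    by (simp add: P_def W_def zpow_def)
  have IH: "(\<Sum>m=1..Suc N. D m * P m (Suc N - m)) = (\<Sum>m=0..N. wd (zpow a m @ z b @ zpow a (N - m)))"
    using Suc.IH unfolding D_def P_def .
  have "(\<Sum>m=1..Suc (Suc N). D m * P m (Suc (Suc N) - m)) = 
     (\<Sum>m=1..Suc N. D m * P m (Suc (Suc N) - m)) + D (Suc (Suc N)) * P (Suc (Suc N)) (Suc (Suc N) - Suc (Suc N))"
    by (rule sum.cl_ivl_Suc[THEN trans]) simp
  also have "\<dots> = (\<Sum>m=0..Suc N. wd (zpow a m @ z b @ zpow a (Suc N - m)))"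
    unfolding L1 L2 last IH R G[symmetric] by (simp add: add_ac)
  finally show ?case unfolding D_def P_def .
qed


theorem lemma4p1:
  fixes a b n :: nat
  assumes "a \<ge> 1" and "b \<ge> 1" and "n \<ge> 1"
  shows "(\<Sum>m = 1..n. smult_e (d m) (hst (z (b + (m - 1) * a)) (zpow a (n - m))))
       = (\<Sum>m = 0..n - 1. wd (zpow a m @ z b @ zpow a (n - 1 - m)))"
proof -
  obtain N where n: "n = Suc N" using assms(3) by (cases n) auto
  show ?thesis unfolding smult_K n using main[OF assms(1,2), of N] by simp
qed

end
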